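(* Let $J'=(z_w,z_w')$ be a nonempty open interval, let $r:J'\to\mathbb{R}$ be differentiable and non-increasing on $J'$, and let $h:J'\to\mathbb{R}$ be differentiable with $\dot h(z)=1+h(z)^2-2r(z)h(z)$ for all $z\in J'$. Assume $h$ has exactly one zero $z_*$ in $J'$. Let $G(z)=z-\dfrac{2h(z)}{2+h(z)^2-2r(z)h(z)}$ and consider the iteration $z_{n+1}=G(z_n)$, $n=0,1,2,\dots$. (1) If $r(z)>0$ for all $z\in(z_w,z_* )$, then for every initial guess $z_0\in(z_w,z_* )$ all iterates are well defined, the sequence $(z_n)$ is monotonically increasing, lies in $(z_w,z_* )$, and converges to $z_*$. (2) If $r(z)<0$ for all $z\in(z_*,z_w')$, then for every initial guess $z_0\in(z_*,z_w')$ all iterates are well defined, the sequence $(z_n)$ is monotonically decreasing, lies in $(z_*,z_w')$, and converges to $z_*$.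
   Context: $\dot h$ denotes $dh/dz$. Since $h(z_* )=0$ and $\dot h(z_* )=1$, uniqueness of the zero gives $h<0$ on $(z_w,z_* )$ and $h>0$ on $(z_*,z_w')$. (In the intended application $z_w<z_w'$ are consecutive poles of $h$.) *)

theory Defs
  imports "HOL-Analysis.Analysis"
begin

definition iter_denom :: "(real \<Rightarrow> real) \<Rightarrow> (real \<Rightarrow> real) \<Rightarrow> real \<Rightarrow> real" where
  "iter_denom r h z = 2 + (h z)^2 - 2 * r z * h z"

definition iter_G :: "(real \<Rightarrow> real) \<Rightarrow> (real \<Rightarrow> real) \<Rightarrow> real \<Rightarrow> real" where
  "iter_G r h z = z - 2 * h z / iter_denom r h z"

end

theory Submission imports Defs "HOL-Analysis.Analysis" begin
lemma alg:
  fixes y c p :: real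
  assumes "c*y \<le> 0" "y \<noteq> 0" "0 \<le> p" "p \<le> 1 + y^2 - 2*c*y"
  shows "2*p*(2 + y^2 - 2*c*y) - 2*y*(2*y*p - 2*c*p) < (2 + y^2 - 2*c*y)^2"
proof -
  define f where "f = 1 + y^2 - 2*c*y"
  have f1: "f \<ge> 1 + y^2" using assms unfolding f_def by linarith
  have y2: "y^2 > 0" using assms by simp
  have eq: "2*p*(2 + y^2 - 2*c*y) - 2*y*(2*y*p - 2*c*p) = p*(4 - 2*y^2)" by (simp add: algebra_simps power2_eq_square)
  have D: "2 + y^2 - 2*c*y = 1 + f" unfolding f_def by simp
  show ?thesis
  proof (cases "4 - 2*y^2 \<ge> 0")
    case True
    have "p*(4 - 2*y^2) \<le> f*(4-2*y^2)" using True assms(4) unfolding f_def by (simp add: mult_right_mono)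
    also have "\<dots> < (1+f)^2"
    proof -
      have "(1+f)^2 - f*(4-2*y^2) = (f-1)^2 + 2*y^2*f" by (simp add: algebra_simps power2_eq_square)
      moreover have "2*y^2*f > 0"
      proof -
        have "f > 0" using f1 y2 by linarith
        then show ?thesis using y2 by (intro mult_pos_pos) auto
      qed
      ultimately show ?thesis using zero_le_power2[of "f - 1"] by linarith
    qed
    finally have *: "p*(4 - 2*y^2) < (1+f)^2" .
    show ?thesis unfolding eq unfolding D using * .
  next
    case False
    have "p*(4 - 2*y^2) \<le> 0" using False assms(3) by (simp add: mult_nonneg_nonpos)
    moreover have "(1+f)^2 > 0"
    proof -
      have "1 + f \<noteq> 0" using f1 y2 by linarith
      then show ?thesis by simp
    qed
    ultimately have *: "p*(4 - 2*y^2) < (1+f)^2" by linarith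
    show ?thesis unfolding eq unfolding D using * .
  qed
qed

lemma key:
  fixes h h' :: "real \<Rightarrow> real" and a b c :: real
  assumes ab: "a<b" and der: "\<forall>w\<in>{a..b}. (h has_real_derivative h' w) (at w)"
   and sg: "\<forall>w\<in>{a..b}. c * h w \<le> 0"
   and nz: "\<forall>w\<in>{a<..<b}. h w \<noteq> 0"
   and hb: "\<forall>w\<in>{a..b}. 0 \<le> h' w \<and> h' w \<le> 1 + (h w)^2 - 2*c*h w"
  shows "a - 2*h a/(2 + (h a)^2 - 2*c*h a) < b - 2*h b/(2 + (h b)^2 - 2*c*h b)"
proof -
  define D where "D = (\<lambda>w. 2 + (h w)^2 - 2*c*h w)"
  have Dpos: "D w > 0" if "w \<in> {a..b}" for w
  proof -
    have a1: "c * h w \<le> 0" using sg that by auto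
    have "2 * c * h w = 2 * (c * h w)" by (simp only: mult.assoc)
    then show ?thesis unfolding D_def using a1 zero_le_power2[of "h w"] by linarith
  qed
  define \<psi>' where "\<psi>' = (\<lambda>w. 1 - (2*h' w * D w - 2*h w*(2*h w*h' w - 2*c*h' w))/(D w)^2)"
  have dpsi: "((\<lambda>w. w - 2*h w/(2 + (h w)^2 - 2*c*h w)) has_real_derivative \<psi>' w) (at w)"
    if "a \<le> w \<and> w \<le> b" for w
  proof -
    have hw: "(h has_real_derivative h' w) (at w)" using der that by auto
    have "D w \<noteq> 0" using Dpos[of w] that by auto
    then show ?thesis unfolding \<psi>'_def D_def
      by (auto intro!: derivative_eq_intros hw simp: field_simps power2_eq_square)
  qed
  obtain z where z: "a < z" "z < b"
    and eqz: "(b - 2*h b/(2 + (h b)^2 - 2*c*h b)) - (a - 2*h a/(2 + (h a)^2 - 2*c*h a)) = (b-a) * \<psi>' z"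
    using MVT2[OF ab dpsi] by blast
  have zz: "z \<in> {a..b}" using z by auto
  have "2*h' z * D z - 2*h z*(2*h z*h' z - 2*c*h' z) < (D z)^2"
    unfolding D_def using alg[of c "h z" "h' z"] sg zz nz z hb by auto
  then have "\<psi>' z > 0" unfolding \<psi>'_def using Dpos[OF zz] by (simp add: field_simps)
  then have "(b - a) * \<psi>' z > 0" using ab by (intro mult_pos_pos) auto
  then show ?thesis using eqz by linarith
qed

theorem theorem3p2:
  fixes r h :: "real \<Rightarrow> real" and zw zw' zs :: real
  assumes interval: "zw < zw'"
    and r_diff: "\<forall>z\<in>{zw<..<zw'}. r differentiable (at z)"
    and r_noninc: "\<forall>x\<in>{zw<..<zw'}. \<forall>y\<in>{zw<..<zw'}. x \<le> y \<longrightarrow> r y \<le> r x"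
    and h_ode: "\<forall>z\<in>{zw<..<zw'}. (h has_real_derivative (1 + (h z)^2 - 2 * r z * h z)) (at z)"
    and zs_in: "zs \<in> {zw<..<zw'}"
    and zs_zero: "h zs = 0"
    and zs_unique: "\<forall>z\<in>{zw<..<zw'}. h z = 0 \<longrightarrow> z = zs"
  shows
    "((\<forall>z\<in>{zw<..<zs}. r z > 0) \<longrightarrow>
       (\<forall>z0\<in>{zw<..<zs}.
          (\<forall>n. (iter_G r h ^^ n) z0 \<in> {zw<..<zs} \<and> iter_denom r h ((iter_G r h ^^ n) z0) \<noteq> 0)
          \<and> incseq (\<lambda>n. (iter_G r h ^^ n) z0)
          \<and> (\<lambda>n. (iter_G r h ^^ n) z0) \<longlonglongrightarrow> zs))
     \<and>
     ((\<forall>z\<in>{zs<..<zw'}. r z < 0) \<longrightarrow>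
       (\<forall>z0\<in>{zs<..<zw'}.
          (\<forall>n. (iter_G r h ^^ n) z0 \<in> {zs<..<zw'} \<and> iter_denom r h ((iter_G r h ^^ n) z0) \<noteq> 0)
          \<and> decseq (\<lambda>n. (iter_G r h ^^ n) z0)
          \<and> (\<lambda>n. (iter_G r h ^^ n) z0) \<longlonglongrightarrow> zs))"
proof -
  define h' where "h' = (\<lambda>w. 1 + (h w)^2 - 2 * r w * h w)"
  have hder: "(h has_real_derivative h' z) (at z)" if "zw < z" "z < zw'" for z
    using h_ode that unfolding h'_def by auto
  have hcont: "continuous_on {a..b} h" if "zw < a" "b < zw'" for a b
  proof (rule continuous_at_imp_continuous_on, rule ballI)
    fix x assume "x \<in> {a..b}"
    then have "zw < x" "x < zw'" using that by auto
    then show "isCont h x" using hder DERIV_isCont by blast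
  qed
  have rcont: "isCont r z" if "zw < z" "z < zw'" for z
    using r_diff that by (auto intro: differentiable_imp_continuous_within)
  have zs1: "zw < zs" "zs < zw'" using zs_in by auto
  have h'zs: "h' zs = 1" unfolding h'_def using zs_zero by simp
  have hneg: "h w < 0" if wI: "zw < w" "w < zs" for w
  proof (rule ccontr)
    assume "\<not> h w < 0"
    then have hw: "h w \<ge> 0" by simp
    obtain d where d: "d > 0" "\<forall>t>0. t < d \<longrightarrow> h (zs - t) < h zs"
      using DERIV_pos_inc_left[OF hder[OF zs1], of] h'zs by auto
    define t where "t = min d (zs - w) / 2"
    have t: "t > 0" "t < d" "t < zs - w" using d wI unfolding t_def by auto
    have hv: "h (zs - t) \<le> 0" using d(2) t zs_zero by (metis less_imp_le)
    obtain x where x: "w \<le> x" "x \<le> zs - t" "h x = 0"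
      using IVT2'[of h "zs - t" 0 w, OF hv hw] t hcont[of w "zs - t"] wI zs1 by auto
    moreover have "x \<in> {zw<..<zw'}" using x wI zs1 t by auto
    ultimately have "x = zs" using zs_unique by auto
    then show False using x wI t by auto
  qed
  have hpos: "h w > 0" if wI: "zs < w" "w < zw'" for w
  proof (rule ccontr)
    assume "\<not> h w > 0"
    then have hw: "h w \<le> 0" by simp
    obtain d where d: "d > 0" "\<forall>t>0. t < d \<longrightarrow> h zs < h (zs + t)"
      using DERIV_pos_inc_right[OF hder[OF zs1], of] h'zs by auto
    define t where "t = min d (w - zs) / 2"
    have t: "t > 0" "t < d" "t < w - zs" using d wI unfolding t_def by auto
    have hv: "h (zs + t) \<ge> 0" using d(2) t zs_zero by (metis less_imp_le)
    obtain x where x: "zs + t \<le> x" "x \<le> w" "h x = 0"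
      using IVT2'[of h w 0 "zs + t", OF hw hv] t hcont[of "zs + t" w] wI zs1 by auto
    moreover have "x \<in> {zw<..<zw'}" using x wI zs1 t by auto
    ultimately have "x = zs" using zs_unique by auto
    then show False using x wI t by auto
  qed
  have Gcont: "isCont (iter_G r h) L" if "zw < L" "L < zw'" "iter_denom r h L \<noteq> 0" for L
  proof -
    have "isCont h L" using hder[OF that(1,2)] by (rule DERIV_isCont)
    moreover have "isCont r L" using rcont that by auto
    ultimately show ?thesis using that(3) unfolding iter_G_def[abs_def] iter_denom_def
      by (intro continuous_intros) auto
  qed
  have part1: "(\<forall>z0\<in>{zw<..<zs}.
          (\<forall>n. (iter_G r h ^^ n) z0 \<in> {zw<..<zs} \<and> iter_denom r h ((iter_G r h ^^ n) z0) \<noteq> 0)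
          \<and> incseq (\<lambda>n. (iter_G r h ^^ n) z0)
          \<and> (\<lambda>n. (iter_G r h ^^ n) z0) \<longlonglongrightarrow> zs)" if rpos: "\<forall>z\<in>{zw<..<zs}. r z > 0"
  proof -
    have step: "iter_denom r h z > 0 \<and> z < iter_G r h z \<and> iter_G r h z < zs" if z: "zw < z" "z < zs" for z
    proof -
      have hz: "h z < 0" using hneg z by auto
      have rz: "r z > 0" using rpos z by auto
      have "r z * h z < 0" using mult_pos_neg[OF rz hz] .
      then have "2 * (r z * h z) < 0" by (rule mult_pos_neg[rotated]) simp
      then have "2 * r z * h z < 0" by (simp only: mult.assoc)
      then have dpos: "iter_denom r h z > 0" unfolding iter_denom_def
        using zero_le_power2[of "h z"] by linarith
      have "2 * h z / iter_denom r h z < 0" using hz dpos by (simp add: divide_neg_pos)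
      then have "z < iter_G r h z" unfolding iter_G_def by simp
      moreover have "iter_G r h z < zs"
      proof -
        have hw0: "h w \<le> 0" if "w \<in> {z..zs}" for w
          using hneg[of w] zs_zero that z by (cases "w = zs") auto
        have rh: "r w * h w \<le> 0" if "w \<in> {z..zs}" for w
        proof (cases "w = zs")
          case True then show ?thesis using zs_zero by simp
        next
          case False
          then have "r w > 0" using rpos that z by auto
          then show ?thesis using hw0[OF that] by (simp add: mult_nonneg_nonpos)
        qed
        have "z - 2*h z/(2 + (h z)^2 - 2*(r z)*h z) < zs - 2*h zs/(2 + (h zs)^2 - 2*(r z)*h zs)"
        proof (rule key[where h' = h'])
          show "z < zs" by fact
          show "\<forall>w\<in>{z..zs}. (h has_real_derivative h' w) (at w)" using hder z zs1 by auto
          show "\<forall>w\<in>{z..zs}. r z * h w \<le> 0" using hw0 rz by (simp add: mult_nonneg_nonpos)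
          show "\<forall>w\<in>{z<..<zs}. h w \<noteq> 0" using hneg z by (metis greaterThanLessThan_iff less_trans less_irrefl)
          show "\<forall>w\<in>{z..zs}. 0 \<le> h' w \<and> h' w \<le> 1 + (h w)^2 - 2*(r z)*h w"
          proof
            fix w assume w: "w \<in> {z..zs}"
            have "r w \<le> r z" using r_noninc w z zs1 by auto
            then have "(r z - r w) * h w \<le> 0" using hw0[OF w] by (simp add: mult_nonneg_nonpos)
            then show "0 \<le> h' w \<and> h' w \<le> 1 + (h w)^2 - 2*(r z)*h w"
            proof -
              have e1: "2 * r w * h w = 2 * (r w * h w)" "2 * r z * h w = 2 * (r z * h w)"
                by (simp_all only: mult.assoc)
              have e2: "(r z - r w) * h w = r z * h w - r w * h w" by (simp only: left_diff_distrib)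
              show ?thesis unfolding h'_def using e1 e2 rh[OF w] \<open>(r z - r w) * h w \<le> 0\<close>
                  zero_le_power2[of "h w"] by linarith
            qed
          qed
        qed
        then show ?thesis using zs_zero unfolding iter_G_def iter_denom_def by simp
      qed
      ultimately show ?thesis using dpos by auto
    qed
    show ?thesis
    proof
      fix z0 assume z0: "z0 \<in> {zw<..<zs}"
      define s where "s = (\<lambda>n. (iter_G r h ^^ n) z0)"
      have sS: "s (Suc n) = iter_G r h (s n)" for n unfolding s_def by simp
      have sin: "s n \<in> {zw<..<zs}" for n
      proof (induction n)
        case 0 then show ?case using z0 unfolding s_def by simp
      next
        case (Suc n) then show ?case using step[of "s n"] sS[of n] by force
      qed
      have sinc: "incseq s" 
      proof (rule incseq_SucI)
        fix n show "s n \<le> s (Suc n)" using step[of "s n"] sin[of n] sS[of n] by auto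
      qed
      have bdd: "bdd_above (range s)" using sin by (auto intro!: bdd_aboveI[of _ zs] less_imp_le)
      define L where "L = (SUP i. s i)"
      have lim: "s \<longlonglongrightarrow> L" unfolding L_def by (rule LIMSEQ_incseq_SUP[OF bdd sinc])
      have Lle: "L \<le> zs" using sin by (intro LIMSEQ_le_const2[OF lim]) (auto intro: less_imp_le)
      have Lge: "s 0 \<le> L" using incseq_le[OF sinc lim] by auto
      have "L = zs"
      proof (rule ccontr)
        assume "L \<noteq> zs"
        then have L: "zw < L" "L < zs" using Lle Lge sin[of 0] by auto
        have dL: "iter_denom r h L > 0" using step[OF L] by auto
        have "(\<lambda>n. iter_G r h (s n)) \<longlonglongrightarrow> iter_G r h L"
          using isCont_tendsto_compose[OF Gcont lim] L zs1 dL by auto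
        moreover have "(\<lambda>n. iter_G r h (s n)) \<longlonglongrightarrow> L"
          using LIMSEQ_Suc[OF lim] unfolding sS .
        ultimately have "iter_G r h L = L" using LIMSEQ_unique by blast
        then show False using step[OF L] by auto
      qed
      show "(\<forall>n. (iter_G r h ^^ n) z0 \<in> {zw<..<zs} \<and> iter_denom r h ((iter_G r h ^^ n) z0) \<noteq> 0)
          \<and> incseq (\<lambda>n. (iter_G r h ^^ n) z0)
          \<and> (\<lambda>n. (iter_G r h ^^ n) z0) \<longlonglongrightarrow> zs"
      proof -
        have "\<forall>n. s n \<in> {zw<..<zs} \<and> iter_denom r h (s n) \<noteq> 0"
        proof
          fix n show "s n \<in> {zw<..<zs} \<and> iter_denom r h (s n) \<noteq> 0"
            using sin[of n] step[of "s n"] by auto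
        qed
        then show ?thesis using sinc lim \<open>L = zs\<close> unfolding s_def by simp
      qed
    qed
  qed
  have part2: "(\<forall>z0\<in>{zs<..<zw'}.
          (\<forall>n. (iter_G r h ^^ n) z0 \<in> {zs<..<zw'} \<and> iter_denom r h ((iter_G r h ^^ n) z0) \<noteq> 0)
          \<and> decseq (\<lambda>n. (iter_G r h ^^ n) z0)
          \<and> (\<lambda>n. (iter_G r h ^^ n) z0) \<longlonglongrightarrow> zs)" if rneg: "\<forall>z\<in>{zs<..<zw'}. r z < 0"
  proof -
    have step: "iter_denom r h z > 0 \<and> iter_G r h z < z \<and> zs < iter_G r h z" if z: "zs < z" "z < zw'" for z
    proof -
      have hz: "h z > 0" using hpos z by auto
      have rz: "r z < 0" using rneg z by auto
      have "r z * h z < 0" using mult_neg_pos[OF rz hz] .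
      then have "2 * (r z * h z) < 0" by (rule mult_pos_neg[rotated]) simp
      then have "2 * r z * h z < 0" by (simp only: mult.assoc)
      then have dpos: "iter_denom r h z > 0" unfolding iter_denom_def
        using zero_le_power2[of "h z"] by linarith
      have "2 * h z / iter_denom r h z > 0" using hz dpos by simp
      then have "iter_G r h z < z" unfolding iter_G_def by simp
      moreover have "zs < iter_G r h z"
      proof -
        have hw0: "h w \<ge> 0" if "w \<in> {zs..z}" for w
          using hpos[of w] zs_zero that z by (cases "w = zs") auto
        have rh: "r w * h w \<le> 0" if "w \<in> {zs..z}" for w
        proof (cases "w = zs")
          case True then show ?thesis using zs_zero by simp
        next
          case False
          then have "r w < 0" using rneg that z by auto
          then show ?thesis using hw0[OF that] mult_nonpos_nonneg[of "r w" "h w"] by linarith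
        qed
        have "zs - 2*h zs/(2 + (h zs)^2 - 2*(r z)*h zs) < z - 2*h z/(2 + (h z)^2 - 2*(r z)*h z)"
        proof (rule key[where h' = h'])
          show "zs < z" by fact
          show "\<forall>w\<in>{zs..z}. (h has_real_derivative h' w) (at w)" using hder z zs1 by auto
          show "\<forall>w\<in>{zs..z}. r z * h w \<le> 0"
          proof
            fix w assume "w \<in> {zs..z}"
            then show "r z * h w \<le> 0" using hw0 rz mult_nonpos_nonneg[of "r z" "h w"] by auto
          qed
          show "\<forall>w\<in>{zs<..<z}. h w \<noteq> 0" using hpos z by (metis greaterThanLessThan_iff less_trans less_irrefl)
          show "\<forall>w\<in>{zs..z}. 0 \<le> h' w \<and> h' w \<le> 1 + (h w)^2 - 2*(r z)*h w"
          proof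
            fix w assume w: "w \<in> {zs..z}"
            have "r z \<le> r w" using r_noninc w z zs1 by auto
            then have "(r z - r w) * h w \<le> 0" using hw0[OF w] mult_nonpos_nonneg[of "r z - r w" "h w"] by linarith
            then show "0 \<le> h' w \<and> h' w \<le> 1 + (h w)^2 - 2*(r z)*h w"
            proof -
              have e1: "2 * r w * h w = 2 * (r w * h w)" "2 * r z * h w = 2 * (r z * h w)"
                by (simp_all only: mult.assoc)
              have e2: "(r z - r w) * h w = r z * h w - r w * h w" by (simp only: left_diff_distrib)
              show ?thesis unfolding h'_def using e1 e2 rh[OF w] \<open>(r z - r w) * h w \<le> 0\<close>
                  zero_le_power2[of "h w"] by linarith
            qed
          qed
        qed
        then show ?thesis using zs_zero unfolding iter_G_def iter_denom_def by simp
      qed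
      ultimately show ?thesis using dpos by auto
    qed
    show ?thesis
    proof
      fix z0 assume z0: "z0 \<in> {zs<..<zw'}"
      define s where "s = (\<lambda>n. (iter_G r h ^^ n) z0)"
      have sS: "s (Suc n) = iter_G r h (s n)" for n unfolding s_def by simp
      have sin: "s n \<in> {zs<..<zw'}" for n
      proof (induction n)
        case 0 then show ?case using z0 unfolding s_def by simp
      next
        case (Suc n) then show ?case using step[of "s n"] sS[of n] by force
      qed
      have sdec: "decseq s" 
      proof (rule decseq_SucI)
        fix n show "s (Suc n) \<le> s n" using step[of "s n"] sin[of n] sS[of n] by auto
      qed
      have bdd: "bdd_below (range s)" using sin by (auto intro!: bdd_belowI[of _ zs] less_imp_le)
      define L where "L = (INF i. s i)"
      have lim: "s \<longlonglongrightarrow> L" unfolding L_def by (rule LIMSEQ_decseq_INF[OF bdd sdec])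
      have Lle: "zs \<le> L" using sin by (intro LIMSEQ_le_const[OF lim]) (auto intro: less_imp_le)
      have Lge: "L \<le> s 0" using decseq_ge[OF sdec lim] by auto
      have "L = zs"
      proof (rule ccontr)
        assume "L \<noteq> zs"
        then have L: "zs < L" "L < zw'" using Lle Lge sin[of 0] by auto
        have dL: "iter_denom r h L > 0" using step[OF L] by auto
        have "(\<lambda>n. iter_G r h (s n)) \<longlonglongrightarrow> iter_G r h L"
          using isCont_tendsto_compose[OF Gcont lim] L zs1 dL by auto
        moreover have "(\<lambda>n. iter_G r h (s n)) \<longlonglongrightarrow> L"
          using LIMSEQ_Suc[OF lim] unfolding sS .
        ultimately have "iter_G r h L = L" using LIMSEQ_unique by blast
        then show False using step[OF L] by auto
      qed
      show "(\<forall>n. (iter_G r h ^^ n) z0 \<in> {zs<..<zw'} \<and> iter_denom r h ((iter_G r h ^^ n) z0) \<noteq> 0)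
          \<and> decseq (\<lambda>n. (iter_G r h ^^ n) z0)
          \<and> (\<lambda>n. (iter_G r h ^^ n) z0) \<longlonglongrightarrow> zs"
      proof -
        have "\<forall>n. s n \<in> {zs<..<zw'} \<and> iter_denom r h (s n) \<noteq> 0"
        proof
          fix n show "s n \<in> {zs<..<zw'} \<and> iter_denom r h (s n) \<noteq> 0"
            using sin[of n] step[of "s n"] by auto
        qed
        then show ?thesis using sdec lim \<open>L = zs\<close> unfolding s_def by simp
      qed
    qed
  qed
  show ?thesis using part1 part2 by blast
qed

end
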